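(* Let $\overline u,P^l\in\mathbb{R}^n$ be constant and let $(\overline\eta,\overline\omega,\overline V)$ with $\overline\eta\in\mathcal{R}(D^T)\cap(-\frac{\pi}{2},\frac{\pi}{2})^m$, $\overline V\in\mathbb{R}^n_{>0}$ be an equilibrium of the network dynamics with $u=\overline u$, i.e. $D^T\overline\omega=\mathbf{0}$, $\mathbf{0}=\overline u-D\Gamma(\overline V)\boldsymbol{\sin}(\overline\eta)-A\overline\omega-P^l$, $\mathbf{0}=-E(\overline\eta)\overline V+\overline E_{fd}$, and suppose $(\overline\eta,\overline V)$ satisfies condition $(\ast)$. Then the network dynamics with input $u$ and output $y=\omega$ is output strictly incrementally passive with respect to $(\overline\eta,\overline\omega,\overline V)$: the function $U=W_1(\omega,\overline\omega)+W_2(\eta,\overline\eta,V,\overline V)$, with $W_1=\frac12(\omega-\overline\omega)^TM(\omega-\overline\omega)$, satisfies along solutions \[ \dot U=-(y-\overline y)^TA(y-\overline y)-(\nabla_VW_2)^TT^{-1}\nabla_VW_2+(y-\overline y)^T(u-\overline u), \] where $\overline y=\overline\omega$.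
   Context: Standing setup (power network model). $\mathcal{G}=(\mathcal{V},\mathcal{E})$ is a connected undirected graph with node set $\{1,\dots,n\}$ and $m$ edges; each edge $k=\{i,j\}$ is given an arbitrary orientation, and $D\in\mathbb{R}^{n\times m}$ is the incidence matrix: $d_{ik}=+1$ if $i$ is the positive end of edge $k$, $-1$ if $i$ is the negative end, $0$ otherwise. $|D|$ denotes the matrix of entrywise absolute values of $D$. $\mathbf{1}_n$ is the all-ones vector. For each edge $k=\{i,j\}$ there is a susceptance $B_{ij}=B_{ji}>0$; each node has a self-susceptance $B_{ii}<0$ with $|B_{ii}|>\sum_{j\in\mathcal{N}_i}|B_{ij}|$ ($\mathcal{N}_i$ the neighbours of $i$ in $\mathcal{G}$), and reactances $X_{di}>X'_{di}>0$. For $V\in\mathbb{R}^n$, $\Gamma(V)=\mathrm{diag}(\gamma_1,\dots,\gamma_m)$ with $\gamma_k=V_iV_jB_{ij}$ for edge $k=\{i,j\}$. For $\eta\in\mathbb{R}^m$, $E(\eta)\in\mathbb{R}^{n\times n}$ is the symmetric matrix with $E_{ii}=\frac{1-B_{ii}(X_{di}-X'_{di})}{X_{di}-X'_{di}}$, $E_{ij}=-B_{ij}\cos(\eta_k)$ if $k=\{i,j\}$ is an edge, and $E_{ij}=0$ otherwise. $\boldsymbol{\sin}$, $\boldsymbol{\cos}$ act componentwise. $M,A,T$ are diagonal positive definite $n\times n$ matrices ($A=\mathrm{diag}(A_i)$), and $\overline E_{fd}\in\mathbb{R}^n$ is a constant vector. The network dynamics, with input $u\in\mathbb{R}^n$ (power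 generation) and demand $P^l$, are \[ \dot\eta=D^T\omega,\quad M\dot\omega=u-D\Gamma(V)\boldsymbol{\sin}(\eta)-A\omega-P^l,\quad T\dot V=-E(\eta)V+\overline E_{fd},\quad y=\omega, \] with state $(\eta,\omega,V)\in\mathbb{R}^m\times\mathbb{R}^n\times\mathbb{R}^n$. Condition $(\ast)$ on $(\overline\eta,\overline V)$: \[ E(\overline\eta)-\mathrm{diag}(\overline V)^{-1}|D|\Gamma(\overline V)\mathrm{diag}(\boldsymbol{\sin}(\overline\eta))\mathrm{diag}(\boldsymbol{\cos}(\overline\eta))^{-1}\mathrm{diag}(\boldsymbol{\sin}(\overline\eta))|D|^T\mathrm{diag}(\overline V)^{-1}>0. \] Storage function: $W_2(\eta,\overline\eta,V,\overline V)=-\mathbf{1}_m^T\Gamma(V)\boldsymbol{\cos}(\eta)+\mathbf{1}_m^T\Gamma(\overline V)\boldsymbol{\cos}(\overline\eta)-(\Gamma(\overline V)\boldsymbol{\sin}(\overline\eta))^T(\eta-\overline\eta)-\overline E_{fd}^T(V-\overline V)+\tfrac12V^TFV-\tfrac12\overline V^TF\overline V$, where $F$ is diagonal with $F_{ii}=\frac{1-B_{ii}(X_{di}-X'_{di})}{X_{di}-X'_{di}}$; note $\nabla_VW_2=E(\eta)V-\overline E_{fd}$. *)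

theory Defs
  imports "HOL-Analysis.Analysis"
begin

text \<open>Graph: nodes of finite type 'n, edges of finite type 'm. Edge k is oriented
  from its positive end pe k to its negative end ne k.\<close>

definition adj :: "('m \<Rightarrow> 'n) \<Rightarrow> ('m \<Rightarrow> 'n) \<Rightarrow> 'n \<Rightarrow> 'n \<Rightarrow> bool" where
  "adj pe ne i j \<longleftrightarrow> (\<exists>k. (pe k = i \<and> ne k = j) \<or> (pe k = j \<and> ne k = i))"

definition simple_connected_graph :: "('m::finite \<Rightarrow> 'n::finite) \<Rightarrow> ('m \<Rightarrow> 'n) \<Rightarrow> bool" where
  "simple_connected_graph pe ne \<longleftrightarrow>
     (\<forall>k. pe k \<noteq> ne k) \<and>
     (\<forall>k l. {pe k, ne k} = {pe l, ne l} \<longrightarrow> k = l) \<and>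
     (\<forall>i j. (adj pe ne)\<^sup>*\<^sup>* i j)"

definition incidence :: "('m::finite \<Rightarrow> 'n::finite) \<Rightarrow> ('m \<Rightarrow> 'n) \<Rightarrow> real^'m^'n" where
  "incidence pe ne = (\<chi> i k. if i = pe k then 1 else if i = ne k then -1 else 0)"

definition abs_mat :: "real^'m^'n \<Rightarrow> real^'m^'n" where
  "abs_mat X = (\<chi> i k. \<bar>X $ i $ k\<bar>)"

definition diag_mat :: "real^'n \<Rightarrow> real^'n^'n" where
  "diag_mat v = (\<chi> i j. if i = j then v $ i else 0)"

definition sinv :: "real^'m \<Rightarrow> real^'m" where "sinv x = (\<chi> k. sin (x $ k))"
definition cosv :: "real^'m \<Rightarrow> real^'m" where "cosv x = (\<chi> k. cos (x $ k))"
definition invv :: "real^'m \<Rightarrow> real^'m" where "invv x = (\<chi> k. inverse (x $ k))"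

definition Gam :: "('m::finite \<Rightarrow> 'n::finite) \<Rightarrow> ('m \<Rightarrow> 'n) \<Rightarrow> ('n \<Rightarrow> 'n \<Rightarrow> real)
    \<Rightarrow> real^'n \<Rightarrow> real^'m^'m" where
  "Gam pe ne B V = diag_mat (\<chi> k. V $ pe k * V $ ne k * B (pe k) (ne k))"

definition Fvec :: "('n::finite \<Rightarrow> 'n \<Rightarrow> real) \<Rightarrow> ('n \<Rightarrow> real) \<Rightarrow> ('n \<Rightarrow> real) \<Rightarrow> real^'n" where
  "Fvec B Xd Xdp = (\<chi> i. (1 - B i i * (Xd i - Xdp i)) / (Xd i - Xdp i))"

definition Fmat :: "('n::finite \<Rightarrow> 'n \<Rightarrow> real) \<Rightarrow> ('n \<Rightarrow> real) \<Rightarrow> ('n \<Rightarrow> real) \<Rightarrow> real^'n^'n" where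
  "Fmat B Xd Xdp = diag_mat (Fvec B Xd Xdp)"

text \<open>E(eta): diagonal F_ii; off-diagonal -B_ij cos(eta_k) if k = {i,j} is an edge
  (the edge is unique since the graph is simple), 0 otherwise.\<close>
definition Emat :: "('m::finite \<Rightarrow> 'n::finite) \<Rightarrow> ('m \<Rightarrow> 'n) \<Rightarrow> ('n \<Rightarrow> 'n \<Rightarrow> real)
    \<Rightarrow> ('n \<Rightarrow> real) \<Rightarrow> ('n \<Rightarrow> real) \<Rightarrow> real^'m \<Rightarrow> real^'n^'n" where
  "Emat pe ne B Xd Xdp eta = (\<chi> i j. if i = j then Fvec B Xd Xdp $ i
      else - (\<Sum>k\<in>{k. {pe k, ne k} = {i, j}}. B i j * cos (eta $ k)))"

definition pos_def :: "real^'n^'n \<Rightarrow> bool" where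
  "pos_def S \<longleftrightarrow> (\<forall>x. x \<noteq> 0 \<longrightarrow> x \<bullet> (S *v x) > 0)"

definition W2 :: "('m::finite \<Rightarrow> 'n::finite) \<Rightarrow> ('m \<Rightarrow> 'n) \<Rightarrow> ('n \<Rightarrow> 'n \<Rightarrow> real)
    \<Rightarrow> ('n \<Rightarrow> real) \<Rightarrow> ('n \<Rightarrow> real) \<Rightarrow> real^'n
    \<Rightarrow> real^'m \<Rightarrow> real^'m \<Rightarrow> real^'n \<Rightarrow> real^'n \<Rightarrow> real" where
  "W2 pe ne B Xd Xdp Efd eta etab V Vb =
     - (vec 1 \<bullet> (Gam pe ne B V *v cosv eta)) + vec 1 \<bullet> (Gam pe ne B Vb *v cosv etab)
     - (Gam pe ne B Vb *v sinv etab) \<bullet> (eta - etab)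
     - Efd \<bullet> (V - Vb)
     + (1/2) * (V \<bullet> (Fmat B Xd Xdp *v V)) - (1/2) * (Vb \<bullet> (Fmat B Xd Xdp *v Vb))"

definition W1 :: "real^'n::finite \<Rightarrow> real^'n \<Rightarrow> real^'n \<Rightarrow> real" where
  "W1 Mv omega omegab = (1/2) * ((omega - omegab) \<bullet> (diag_mat Mv *v (omega - omegab)))"

end

theory Submission
  imports Defs
begin


lemma vd_comp: fixes f :: "real \<Rightarrow> real^'n" assumes "(f has_vector_derivative d) (at t)"
  shows "((\<lambda>s. f s $ k) has_real_derivative d $ k) (at t)"
proof -
  have "(f has_derivative (\<lambda>x. x *\<^sub>R d)) (at t)" using assms by (simp add: has_vector_derivative_def)
  from bounded_linear.has_derivative[OF bounded_linear_vec_nth this, of k]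
  have "((\<lambda>s. f s $ k) has_derivative (\<lambda>x. x * d $ k)) (at t)" by simp
  moreover have "(\<lambda>x. x * d $ k) = (*) (d $ k)" by (auto simp: fun_eq_iff)
  ultimately show ?thesis by (simp add: has_field_derivative_def)
qed

lemma diag_mv: "diag_mat v *v x = (\<chi> i. v$i * x$i)"
proof -
  have "(\<Sum>j\<in>UNIV. (if i = j then v$i else 0) * x$j) = v$i * x$i" for i
  proof -
    have "(\<Sum>j\<in>UNIV. (if i = j then v$i else 0) * x$j) = (\<Sum>j\<in>UNIV. if i = j then v$i * x$j else 0)"
      by (rule sum.cong) auto
    then show ?thesis by simp
  qed
  then show ?thesis by (simp add: diag_mat_def matrix_vector_mult_def vec_eq_iff)
qed

lemma transpose_diag: "transpose (diag_mat v) = diag_mat v"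
  by (simp add: diag_mat_def transpose_def vec_eq_iff)

lemma dot_mv_transpose: "(x::real^'n) \<bullet> (A *v y) = (transpose A *v x) \<bullet> y"
  unfolding inner_vec_def matrix_vector_mult_def transpose_def
  by (simp add: sum_distrib_left sum_distrib_right mult_ac) (rule sum.swap)

lemma gam_mv: "Gam pe ne B V *v x = (\<chi> k. V$pe k * V$ne k * B (pe k) (ne k) * x$k)"
  by (simp add: Gam_def diag_mv)

lemma fmat_mv: "Fmat B Xd Xdp *v x = (\<chi> i. Fvec B Xd Xdp $ i * x$i)"
  by (simp add: Fmat_def diag_mv)

lemma absD_T_mv:
  assumes "\<forall>k. pe k \<noteq> ne k"
  shows "transpose (abs_mat (incidence pe ne)) *v x = (\<chi> k. x $ pe k + x $ ne k)"
proof -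
  have "(\<Sum>i\<in>UNIV. \<bar>if i = pe k then 1 else if i = ne k then -1 else 0\<bar> * x $ i) = x $ pe k + x $ ne k" for k
  proof -
    have "(\<Sum>i\<in>UNIV. \<bar>if i = pe k then 1 else if i = ne k then -1 else 0\<bar> * x $ i)
        = (\<Sum>i\<in>UNIV. (if i = pe k then x $ i else 0) + (if i = ne k then x $ i else 0))"
      using assms by (intro sum.cong) auto
    also have "\<dots> = x $ pe k + x $ ne k" by (simp add: sum.distrib)
    finally show ?thesis .
  qed
  then show ?thesis
    by (simp add: abs_mat_def incidence_def transpose_def matrix_vector_mult_def vec_eq_iff)
qed

lemma double_delta:
  fixes g :: "'n::finite \<Rightarrow> 'n \<Rightarrow> real"
  assumes "p \<noteq> q"
  shows "(\<Sum>i\<in>UNIV. \<Sum>j\<in>UNIV. if i \<noteq> j \<and> {p, q} = {i, j} then g i j else 0) = g p q + g q p"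
proof -
  have "(\<Sum>j\<in>UNIV. if i \<noteq> j \<and> {p, q} = {i, j} then g i j else 0)
     = (if i = p then g p q else 0) + (if i = q then g q p else 0)" for i
  proof (cases "i = p \<or> i = q")
    case True
    then obtain r where o: "(i = p \<and> r = q) \<or> (i = q \<and> r = p)" by blast
    have "(\<Sum>j\<in>UNIV. if i \<noteq> j \<and> {p, q} = {i, j} then g i j else 0) = (\<Sum>j\<in>UNIV. if j = r then g i j else 0)"
      by (rule sum.cong) (use o assms in \<open>auto simp: doubleton_eq_iff\<close>)
    then show ?thesis using o assms by auto
  next
    case False
    then show ?thesis by (auto simp: doubleton_eq_iff)
  qed
  then show ?thesis by (simp add: sum.distrib)
qed

lemma sum_swap3:
  "(\<Sum>i\<in>UNIV. \<Sum>j\<in>UNIV. \<Sum>k\<in>UNIV. f i j k) = (\<Sum>k\<in>UNIV. \<Sum>i\<in>UNIV. \<Sum>j\<in>UNIV. (f i j k :: real))"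
proof -
  have "(\<Sum>i\<in>UNIV. \<Sum>j\<in>UNIV. \<Sum>k\<in>UNIV. f i j k) = (\<Sum>i\<in>UNIV. \<Sum>k\<in>UNIV. \<Sum>j\<in>UNIV. f i j k)"
    by (rule sum.cong[OF refl], rule sum.swap)
  also have "\<dots> = (\<Sum>k\<in>UNIV. \<Sum>i\<in>UNIV. \<Sum>j\<in>UNIV. f i j k)" by (rule sum.swap)
  finally show ?thesis .
qed

lemma emat_bilin:
  assumes pn: "\<forall>k. pe k \<noteq> ne k" and Bs: "\<forall>i j. B i j = B j i"
  shows "x \<bullet> (Emat pe ne B Xd Xdp eta *v y) =
     (\<Sum>i\<in>UNIV. Fvec B Xd Xdp $ i * x$i * y$i)
     - (\<Sum>k\<in>UNIV. B (pe k) (ne k) * cos (eta$k) * (x $ pe k * y $ ne k + x $ ne k * y $ pe k))"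
proof -
  let ?F = "Fvec B Xd Xdp"
  let ?h = "\<lambda>i j k. B i j * cos (eta $ k) * x $ i * y $ j"
  have "x \<bullet> (Emat pe ne B Xd Xdp eta *v y) =
      (\<Sum>i\<in>UNIV. \<Sum>j\<in>UNIV. x$i * (if i = j then ?F $ i else - (\<Sum>k\<in>{k. {pe k, ne k} = {i, j}}. B i j * cos (eta $ k))) * y$j)"
    by (simp add: inner_vec_def matrix_vector_mult_def Emat_def sum_distrib_left mult.assoc)
  also have "\<dots> = (\<Sum>i\<in>UNIV. \<Sum>j\<in>UNIV. (if i = j then ?F $ i * x$i * y$i else 0)
           - (\<Sum>k\<in>UNIV. if i \<noteq> j \<and> {pe k, ne k} = {i, j} then ?h i j k else 0))"
  proof (intro sum.cong refl)
    fix i j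
    show "x$i * (if i = j then ?F $ i else - (\<Sum>k\<in>{k. {pe k, ne k} = {i, j}}. B i j * cos (eta $ k))) * y$j
      = (if i = j then ?F $ i * x$i * y$i else 0)
           - (\<Sum>k\<in>UNIV. if i \<noteq> j \<and> {pe k, ne k} = {i, j} then ?h i j k else 0)"
    proof (cases "i = j")
      case True then show ?thesis by simp
    next
      case False
      have "(\<Sum>k\<in>UNIV. if i \<noteq> j \<and> {pe k, ne k} = {i, j} then ?h i j k else 0)
          = (\<Sum>k\<in>{k\<in>UNIV. {pe k, ne k} = {i, j}}. ?h i j k)"
        using False by (simp add: sum.If_cases)
      also have "\<dots> = x$i * (\<Sum>k\<in>{k. {pe k, ne k} = {i, j}}. B i j * cos (eta $ k)) * y$j"
        by (simp add: sum_distrib_left sum_distrib_right mult_ac)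
      finally show ?thesis using False by simp
    qed
  qed
  also have "\<dots> = (\<Sum>i\<in>UNIV. ?F $ i * x$i * y$i)
      - (\<Sum>k\<in>UNIV. \<Sum>i\<in>UNIV. \<Sum>j\<in>UNIV. if i \<noteq> j \<and> {pe k, ne k} = {i, j} then ?h i j k else 0)"
    unfolding sum_subtractf by (subst sum_swap3) simp
  also have "\<dots> = (\<Sum>i\<in>UNIV. ?F $ i * x$i * y$i)
      - (\<Sum>k\<in>UNIV. ?h (pe k) (ne k) k + ?h (ne k) (pe k) k)"
    using pn by (simp add: double_delta)
  also have "\<dots> = (\<Sum>i\<in>UNIV. ?F $ i * x$i * y$i)
     - (\<Sum>k\<in>UNIV. B (pe k) (ne k) * cos (eta$k) * (x $ pe k * y $ ne k + x $ ne k * y $ pe k))"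
    using Bs by (simp add: algebra_simps)
  finally show ?thesis .
qed



lemma abs3: "0 \<le> (g::real) \<Longrightarrow> \<bar>g * c * X\<bar> = g * (\<bar>c\<bar> * \<bar>X\<bar>)" by (simp add: abs_mult)

lemma sin_cubic: "\<bar>sin x - x\<bar> \<le> \<bar>x\<bar>^3 / (6::real)"
proof -
  have "\<bar>sin x - (\<Sum>m<3. sin_coeff m * x ^ m)\<bar> \<le> inverse (fact 3) * \<bar>x\<bar> ^ 3"
    by (rule Maclaurin_sin_bound)
  moreover have "(\<Sum>m<3. sin_coeff m * x ^ m) = x"
    by (simp add: numeral_3_eq_3 sin_coeff_def)
  moreover have "(fact 3 :: real) = 6" by (simp add: numeral_3_eq_3)
  ultimately show ?thesis by simp
qed

lemma cos_quad: "\<bar>cos a - 1\<bar> \<le> a^2 / (2::real)"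
proof -
  have "cos a = cos (2 * (a/2))" by simp
  also have "\<dots> = 1 - 2 * sin (a/2) ^ 2" by (rule cos_double_sin)
  finally have c: "cos a - 1 = - 2 * sin (a/2) ^ 2" by simp
  have "sin (a/2) ^ 2 \<le> (a/2)^2"
    using abs_sin_x_le_abs_x[of "a/2"] by (metis abs_ge_zero power2_abs power_mono)
  then show ?thesis unfolding c by (simp add: power2_eq_square)
qed

lemma cos_quart: assumes "\<bar>a\<bar> \<le> (1::real)" shows "\<bar>1 - cos a - a^2/2\<bar> \<le> \<bar>a\<bar>^3"
proof -
  define t where "t = a/2"
  have "cos a = cos (2 * t)" by (simp add: t_def)
  also have "\<dots> = 1 - 2 * sin t ^ 2" by (rule cos_double_sin)
  finally have "1 - cos a - a^2/2 = 2 * (sin t - t) * (sin t + t)"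
    by (simp add: t_def power2_eq_square algebra_simps)
  moreover have "\<And>X Y::real. \<bar>2 * X * Y\<bar> = 2 * \<bar>X\<bar> * \<bar>Y\<bar>" by (simp add: abs_mult)
  ultimately have "\<bar>1 - cos a - a^2/2\<bar> = 2 * \<bar>sin t - t\<bar> * \<bar>sin t + t\<bar>" by metis
  also have "\<dots> \<le> 2 * (\<bar>t\<bar>^3/6) * (2 * \<bar>t\<bar>)"
  proof (intro mult_mono)
    show "\<bar>sin t - t\<bar> \<le> \<bar>t\<bar>^3/6" by (rule sin_cubic)
    show "\<bar>sin t + t\<bar> \<le> 2 * \<bar>t\<bar>" using abs_sin_x_le_abs_x[of t] by linarith
  qed auto
  also have "\<dots> = \<bar>a\<bar>^3 * (\<bar>a\<bar> / 24)" by (simp add: t_def power3_eq_cube abs_mult)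
  also have "\<dots> \<le> \<bar>a\<bar>^3 * 1" using assms by (intro mult_left_mono) auto
  finally show ?thesis by simp
qed

lemma R_bound:
  fixes a bp bq n bb vp vq e :: real
  assumes "\<bar>a\<bar> \<le> n" "\<bar>bp\<bar> \<le> n" "\<bar>bq\<bar> \<le> n" "n \<le> 1" "bb \<ge> 0" "vp \<ge> 0" "vq \<ge> 0"
  shows "\<bar>bb * vp * vq * cos e * (1 - cos a - a^2/2) + bb * vp * vq * sin e * (sin a - a)
          - bb * (vp * bq + vq * bp) * (cos (e+a) - cos e + sin e * a) - bb * bp * bq * (cos (e+a) - cos e)\<bar>
       \<le> (2 * (bb * vp * vq) + bb * (vp+vq) + 2 * bb) * n^3"
proof -
  have n0: "0 \<le> n" using assms(1) by linarith
  have a1: "\<bar>a\<bar> \<le> 1" using assms by linarith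
  have g0: "0 \<le> bb * vp * vq" using assms by simp
  have an3: "\<bar>a\<bar>^3 \<le> n^3" using assms(1) by (simp add: power_mono)
  have an2: "a^2 \<le> n^2" using assms(1) by (metis abs_ge_zero power2_abs power_mono)
  have n32: "n^3 \<le> n^2" using n0 assms(4) by (simp add: power_decreasing)
  have n21: "n^2 \<le> n" using n0 assms(4) by (simp add: power2_eq_square mult_left_le)
  have T1: "\<bar>bb * vp * vq * cos e * (1 - cos a - a^2/2)\<bar> \<le> bb * vp * vq * n^3"
  proof -
    have "\<bar>bb * vp * vq * cos e * (1 - cos a - a^2/2)\<bar> = bb * vp * vq * (\<bar>cos e\<bar> * \<bar>1 - cos a - a^2/2\<bar>)"
      using g0 by (rule abs3)
    also have "\<dots> \<le> bb * vp * vq * (1 * n^3)"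
      by (intro mult_left_mono mult_mono g0) (use cos_quart[OF a1] an3 in auto)
    finally show ?thesis by simp
  qed
  have sa: "\<bar>sin a - a\<bar> \<le> n^3"
    using sin_cubic[of a] an3 zero_le_power[of "\<bar>a\<bar>" 3] by linarith
  have T2: "\<bar>bb * vp * vq * sin e * (sin a - a)\<bar> \<le> bb * vp * vq * n^3"
  proof -
    have "\<bar>bb * vp * vq * sin e * (sin a - a)\<bar> = bb * vp * vq * (\<bar>sin e\<bar> * \<bar>sin a - a\<bar>)"
      using g0 by (rule abs3)
    also have "\<dots> \<le> bb * vp * vq * (1 * n^3)"
      by (intro mult_left_mono mult_mono g0) (use sa in auto)
    finally show ?thesis by simp
  qed
  have r3: "\<bar>cos (e+a) - cos e + sin e * a\<bar> \<le> n^2"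
  proof -
    have "cos (e+a) - cos e + sin e * a = cos e * (cos a - 1) - sin e * (sin a - a)"
      by (simp add: cos_add algebra_simps)
    then have "\<bar>cos (e+a) - cos e + sin e * a\<bar> \<le> \<bar>cos e\<bar> * \<bar>cos a - 1\<bar> + \<bar>sin e\<bar> * \<bar>sin a - a\<bar>"
      by (metis abs_mult abs_triangle_ineq4)
    also have "\<dots> \<le> 1 * (a^2/2) + 1 * (\<bar>a\<bar>^3/6)"
      by (intro add_mono mult_mono) (use cos_quad[of a] sin_cubic[of a] in auto)
    also have "\<dots> \<le> n^2" using an2 an3 n32 zero_le_power2[of n] by linarith
    finally show ?thesis .
  qed
  have r4: "\<bar>cos (e+a) - cos e\<bar> \<le> 2 * n"
  proof -
    have "cos (e+a) - cos e = cos e * (cos a - 1) - sin e * sin a"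
      by (simp add: cos_add algebra_simps)
    then have "\<bar>cos (e+a) - cos e\<bar> \<le> \<bar>cos e\<bar> * \<bar>cos a - 1\<bar> + \<bar>sin e\<bar> * \<bar>sin a\<bar>"
      by (metis abs_mult abs_triangle_ineq4)
    also have "\<dots> \<le> 1 * (a^2/2) + 1 * \<bar>a\<bar>"
      by (intro add_mono mult_mono) (use cos_quad[of a] abs_sin_x_le_abs_x[of a] in auto)
    also have "\<dots> \<le> 2 * n" using an2 n21 assms(1) by simp
    finally show ?thesis .
  qed
  have L: "\<bar>bb * (vp * bq + vq * bp)\<bar> \<le> bb * (vp+vq) * n"
  proof -
    have l1: "\<bar>vp * bq\<bar> \<le> vp * n" using assms by (simp add: abs_mult mult_left_mono)
    have l2: "\<bar>vq * bp\<bar> \<le> vq * n" using assms by (simp add: abs_mult mult_left_mono)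
    have "\<bar>vp * bq + vq * bp\<bar> \<le> vp * n + vq * n"
      using abs_triangle_ineq[of "vp * bq" "vq * bp"] l1 l2 by linarith
    then have "bb * \<bar>vp * bq + vq * bp\<bar> \<le> bb * (vp * n + vq * n)" using assms by (intro mult_left_mono) auto
    moreover have "\<bar>bb * (vp * bq + vq * bp)\<bar> = bb * \<bar>vp * bq + vq * bp\<bar>" using assms by (simp add: abs_mult)
    moreover have "bb * (vp * n+vq * n) = bb * (vp+vq) * n" by (simp add: algebra_simps)
    ultimately show ?thesis by linarith
  qed
  have T3: "\<bar>bb * (vp * bq + vq * bp) * (cos (e+a) - cos e + sin e * a)\<bar> \<le> bb * (vp+vq) * n^3"
  proof -
    have "\<bar>bb * (vp * bq + vq * bp) * (cos (e+a) - cos e + sin e * a)\<bar> \<le> (bb * (vp+vq) * n) * n^2"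
      unfolding abs_mult[of "bb * (vp * bq + vq * bp)"] by (intro mult_mono L r3) (use assms n0 in auto)
    then show ?thesis by (simp add: power2_eq_square power3_eq_cube mult_ac)
  qed
  have T4: "\<bar>bb * bp * bq * (cos (e+a) - cos e)\<bar> \<le> 2 * bb * n^3"
  proof -
    have "\<bar>bp * bq\<bar> \<le> n * n" unfolding abs_mult using assms n0 by (intro mult_mono) auto
    then have "\<bar>bb * (bp * bq) * (cos (e+a) - cos e)\<bar> \<le> (bb * (n * n)) * (2 * n)"
      unfolding abs_mult using assms n0 r4 by (intro mult_mono) (auto intro: mult_left_mono)
    then show ?thesis by (simp add: power3_eq_cube mult_ac)
  qed
  show ?thesis using T1 T2 T3 T4 unfolding abs_le_iff by (simp add: algebra_simps)
qed


lemma P_quad: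
  assumes pn: "\<forall>k. pe k \<noteq> ne k"
  shows "b \<bullet> ((diag_mat (invv Vb) ** abs_mat (incidence pe ne) ** Gam pe ne B Vb ** diag_mat (sinv etab)
                   ** diag_mat (invv (cosv etab)) ** diag_mat (sinv etab) ** transpose (abs_mat (incidence pe ne))
                   ** diag_mat (invv Vb)) *v b)
   = (\<Sum>k\<in>UNIV. Vb$pe k * Vb$ne k * B (pe k) (ne k) * (sin (etab$k) * inverse (cos (etab$k)) * sin (etab$k))
        * (inverse (Vb$pe k) * b$pe k + inverse (Vb$ne k) * b$ne k)^2)"
proof -
  let ?A = "abs_mat (incidence pe ne)"
  define y where "y = transpose ?A *v (diag_mat (invv Vb) *v b)"
  have y: "y $ k = inverse (Vb$pe k) * b$pe k + inverse (Vb$ne k) * b$ne k" for k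
    unfolding y_def absD_T_mv[OF pn] diag_mv by (simp add: invv_def)
  have "b \<bullet> ((diag_mat (invv Vb) ** ?A ** Gam pe ne B Vb ** diag_mat (sinv etab)
                   ** diag_mat (invv (cosv etab)) ** diag_mat (sinv etab) ** transpose ?A
                   ** diag_mat (invv Vb)) *v b)
     = b \<bullet> (diag_mat (invv Vb) *v (?A *v (Gam pe ne B Vb *v (diag_mat (sinv etab) *v
          (diag_mat (invv (cosv etab)) *v (diag_mat (sinv etab) *v y))))))"
    unfolding y_def by (simp add: matrix_vector_mul_assoc matrix_mul_assoc)
  also have "\<dots> = y \<bullet> (Gam pe ne B Vb *v (diag_mat (sinv etab) *v
          (diag_mat (invv (cosv etab)) *v (diag_mat (sinv etab) *v y))))"
    unfolding y_def by (simp only: dot_mv_transpose transpose_diag)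
  also have "\<dots> = (\<Sum>k\<in>UNIV. Vb$pe k * Vb$ne k * B (pe k) (ne k) * (sin (etab$k) * inverse (cos (etab$k)) * sin (etab$k))
        * (y $ k)^2)"
    by (simp add: gam_mv diag_mv inner_vec_def sinv_def cosv_def invv_def power2_eq_square mult_ac)
  finally show ?thesis by (simp add: y)
qed

lemma edge_id:
  fixes bb vp vq bp bq e a :: real
  shows "- bb * (vp+bp) * (vq+bq) * cos (e+a) + bb * vp * vq * cos e - bb * vp * vq * sin e * a
   = (bb * vp * vq * cos e)/2 * a^2 + bb * (vp * bq + vq * bp) * sin e * a - bb * bp * bq * cos e - bb * (vp * bq+vq * bp) * cos e
     + (bb * vp * vq * cos e * (1 - cos a - a^2/2) + bb * vp * vq * sin e * (sin a - a)
          - bb * (vp * bq + vq * bp) * (cos (e+a) - cos e + sin e * a) - bb * bp * bq * (cos (e+a) - cos e))"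
  by (simp add: cos_add algebra_simps power2_eq_square)



lemma W1_exp: "W1 Mv om ob = (\<Sum>i\<in>UNIV. Mv$i*(om$i - ob$i)^2/2)"
  by (simp add: W1_def diag_mv inner_vec_def sum_divide_distrib sum_distrib_left power2_eq_square mult_ac)

lemma W2_exp: "W2 pe ne B Xd Xdp Efd et eb VV Vb =
   (\<Sum>k\<in>UNIV. - B (pe k) (ne k) * VV$pe k * VV$ne k * cos (et$k)
       + B (pe k) (ne k) * Vb$pe k * Vb$ne k * cos (eb$k)
       - B (pe k) (ne k) * Vb$pe k * Vb$ne k * sin (eb$k) * (et$k - eb$k))
 + (\<Sum>i\<in>UNIV. - Efd$i * (VV$i - Vb$i) + Fvec B Xd Xdp $ i * (VV$i)^2/2 - Fvec B Xd Xdp $ i * (Vb$i)^2/2)"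
  by (simp add: W2_def gam_mv fmat_mv inner_vec_def sinv_def cosv_def sum.distrib sum_subtractf
        sum_divide_distrib sum_distrib_left power2_eq_square algebra_simps)

lemma deriv_part:
  fixes pe ne :: "'m::finite \<Rightarrow> 'n::finite"
    and B :: "'n \<Rightarrow> 'n \<Rightarrow> real" and Xd Xdp :: "'n \<Rightarrow> real"
    and Mv Av Tv Efd ub Pl omegab Vb :: "real^'n" and etab :: "real^'m"
    and eta :: "real \<Rightarrow> real^'m" and omega V u :: "real \<Rightarrow> real^'n" and t :: real
  assumes pn: "\<forall>k. pe k \<noteq> ne k" and Bs: "\<forall>i j. B i j = B j i"
    and Mpos: "\<forall>i. Mv $ i > 0"
    and eq1: "transpose (incidence pe ne) *v omegab = 0"
    and eq2: "0 = ub - incidence pe ne *v (Gam pe ne B Vb *v sinv etab) - diag_mat Av *v omegab - Pl"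
    and sol_eta: "(eta has_vector_derivative (transpose (incidence pe ne) *v omega t)) (at t)"
    and sol_omega: "(omega has_vector_derivative
          (diag_mat (invv Mv) *v (u t - incidence pe ne *v (Gam pe ne B (V t) *v sinv (eta t))
                                   - diag_mat Av *v omega t - Pl))) (at t)"
    and sol_V: "(V has_vector_derivative
          (diag_mat (invv Tv) *v (- (Emat pe ne B Xd Xdp (eta t) *v V t) + Efd))) (at t)"
  shows "((\<lambda>s. W1 Mv (omega s) omegab + W2 pe ne B Xd Xdp Efd (eta s) etab (V s) Vb) has_real_derivative
         (- ((omega t - omegab) \<bullet> (diag_mat Av *v (omega t - omegab)))
          - ((Emat pe ne B Xd Xdp (eta t) *v V t - Efd)
               \<bullet> (diag_mat (invv Tv) *v (Emat pe ne B Xd Xdp (eta t) *v V t - Efd)))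
          + (omega t - omegab) \<bullet> (u t - ub))) (at t)"
proof -
  define D where "D = incidence pe ne"
  define F where "F = Fvec B Xd Xdp"
  define E where "E = Emat pe ne B Xd Xdp (eta t)"
  define e' where "e' = transpose D *v omega t"
  define r where "r = u t - D *v (Gam pe ne B (V t) *v sinv (eta t)) - diag_mat Av *v omega t - Pl"
  define w' where "w' = diag_mat (invv Mv) *v r"
  define g where "g = E *v V t - Efd"
  define V' where "V' = diag_mat (invv Tv) *v (- (E *v V t) + Efd)"
  define z where "z = Gam pe ne B (V t) *v sinv (eta t) - Gam pe ne B Vb *v sinv etab"
  define bb where "bb = (\<lambda>k. B (pe k) (ne k))"
  define N where "N = (\<lambda>i s. Mv$i*(omega s$i - omegab$i)^2/2 - Efd$i*(V s$i - Vb$i) + F$i*(V s$i)^2/2 - F$i*(Vb$i)^2/2)"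
  define Ed where "Ed = (\<lambda>k s. - bb k * V s$pe k * V s$ne k * cos (eta s$k) + bb k * Vb$pe k * Vb$ne k * cos (etab$k)
        - bb k * Vb$pe k * Vb$ne k * sin (etab$k) * (eta s$k - etab$k))"
  have de: "\<And>k. ((\<lambda>s. eta s $ k) has_real_derivative e' $ k) (at t)"
    using vd_comp[OF sol_eta] unfolding e'_def D_def .
  have dw: "\<And>k. ((\<lambda>s. omega s $ k) has_real_derivative w' $ k) (at t)"
    using vd_comp[OF sol_omega] unfolding w'_def r_def D_def .
  have dV: "\<And>k. ((\<lambda>s. V s $ k) has_real_derivative V' $ k) (at t)"
    using vd_comp[OF sol_V] unfolding V'_def E_def .
  have Uexp: "W1 Mv (omega s) omegab + W2 pe ne B Xd Xdp Efd (eta s) etab (V s) Vb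
      = (\<Sum>i\<in>UNIV. N i s) + (\<Sum>k\<in>UNIV. Ed k s)" for s
    unfolding W1_exp W2_exp N_def Ed_def F_def bb_def
    by (simp add: sum.distrib sum_subtractf algebra_simps)
  have dN: "((\<lambda>s. N i s) has_real_derivative
      Mv$i*(omega t$i - omegab$i)*w'$i - Efd$i*V'$i + F$i*V t$i*V'$i) (at t)" for i
    unfolding N_def by (auto intro!: derivative_eq_intros dw dV de simp: power2_eq_square field_simps)
  have dE: "((\<lambda>s. Ed k s) has_real_derivative
      - bb k * (V' $ pe k * V t $ ne k + V t $ pe k * V' $ ne k) * cos (eta t $ k)
      + (bb k * V t$pe k * V t$ne k * sin (eta t $k) - bb k * Vb$pe k * Vb$ne k * sin (etab$k)) * e'$k) (at t)" for k
    unfolding Ed_def by (auto intro!: derivative_eq_intros dw dV de simp: power2_eq_square field_simps)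
  have dU: "((\<lambda>s. W1 Mv (omega s) omegab + W2 pe ne B Xd Xdp Efd (eta s) etab (V s) Vb) has_real_derivative
      (\<Sum>i\<in>UNIV. Mv$i*(omega t$i - omegab$i)*w'$i - Efd$i*V'$i + F$i*V t$i*V'$i)
      + (\<Sum>k\<in>UNIV. - bb k * (V' $ pe k * V t $ ne k + V t $ pe k * V' $ ne k) * cos (eta t $ k)
      + (bb k * V t$pe k * V t$ne k * sin (eta t $k) - bb k * Vb$pe k * Vb$ne k * sin (etab$k)) * e'$k)) (at t)"
    unfolding Uexp by (intro DERIV_add DERIV_sum dN dE)
  have cA: "(\<Sum>i\<in>UNIV. Mv$i*(omega t$i - omegab$i)*w'$i) = (omega t - omegab) \<bullet> r"
  proof -
    have "Mv$x \<noteq> 0" for x using Mpos by (metis less_irrefl)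
    then show ?thesis unfolding w'_def diag_mv inner_vec_def
      by (intro sum.cong refl) (simp add: invv_def field_simps)
  qed
  have cB: "(\<Sum>k\<in>UNIV. (bb k * V t$pe k * V t$ne k * sin (eta t $k) - bb k * Vb$pe k * Vb$ne k * sin (etab$k)) * e'$k)
     = z \<bullet> e'"
    unfolding z_def inner_vec_def gam_mv sinv_def bb_def by (simp add: algebra_simps)
  have cC: "V' \<bullet> (E *v V t) = (\<Sum>i\<in>UNIV. F$i * V' $ i * V t $ i)
     - (\<Sum>k\<in>UNIV. bb k * cos (eta t $ k) * (V' $ pe k * V t $ ne k + V' $ ne k * V t $ pe k))"
    unfolding E_def F_def bb_def by (rule emat_bilin[OF pn Bs])
  have cD: "V' \<bullet> g = - (g \<bullet> (diag_mat (invv Tv) *v g))"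
    unfolding V'_def g_def diag_mv inner_vec_def by (simp add: sum_negf[symmetric] algebra_simps)
  have cE: "r = (u t - ub) - D *v z - diag_mat Av *v (omega t - omegab)"
  proof -
    have "Pl = ub - D *v (Gam pe ne B Vb *v sinv etab) - diag_mat Av *v omegab"
      using eq2 unfolding D_def by (simp add: algebra_simps)
    then show ?thesis unfolding r_def z_def by (simp add: algebra_simps)
  qed
  have cF: "(omega t - omegab) \<bullet> (D *v z) = e' \<bullet> z"
    unfolding dot_mv_transpose e'_def using eq1 unfolding D_def by (simp add: algebra_simps)
  have total: "(\<Sum>i\<in>UNIV. Mv$i*(omega t$i - omegab$i)*w'$i - Efd$i*V'$i + F$i*V t$i*V'$i)
      + (\<Sum>k\<in>UNIV. - bb k * (V' $ pe k * V t $ ne k + V t $ pe k * V' $ ne k) * cos (eta t $ k)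
      + (bb k * V t$pe k * V t$ne k * sin (eta t $k) - bb k * Vb$pe k * Vb$ne k * sin (etab$k)) * e'$k)
     = (omega t - omegab) \<bullet> r + z \<bullet> e' + V' \<bullet> (E *v V t) - V' \<bullet> Efd"
    unfolding cC sum.distrib cA[symmetric] cB[symmetric]
    by (simp add: sum.distrib sum_subtractf sum_negf inner_vec_def algebra_simps)
  have "(omega t - omegab) \<bullet> r + z \<bullet> e' + V' \<bullet> (E *v V t) - V' \<bullet> Efd
     = - ((omega t - omegab) \<bullet> (diag_mat Av *v (omega t - omegab)))
          - (g \<bullet> (diag_mat (invv Tv) *v g)) + (omega t - omegab) \<bullet> (u t - ub)"
  proof -
    have "V' \<bullet> (E *v V t) - V' \<bullet> Efd = V' \<bullet> g" unfolding g_def by (simp add: inner_diff_right)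
    moreover have "(omega t - omegab) \<bullet> r = (omega t - omegab) \<bullet> (u t - ub) - e' \<bullet> z
        - (omega t - omegab) \<bullet> (diag_mat Av *v (omega t - omegab))"
      unfolding cE cF[symmetric] by (simp add: inner_diff_right)
    ultimately show ?thesis using cD by (simp add: inner_commute algebra_simps)
  qed
  then show ?thesis using dU total unfolding g_def E_def by simp
qed


lemma locmin_part:
  fixes pe ne :: "'m::finite \<Rightarrow> 'n::finite"
    and B :: "'n \<Rightarrow> 'n \<Rightarrow> real" and Xd Xdp :: "'n \<Rightarrow> real"
    and Mv Efd omegab Vb :: "real^'n" and etab :: "real^'m"
  assumes pn: "\<forall>k. pe k \<noteq> ne k" and Bs: "\<forall>i j. B i j = B j i"
    and bpos: "\<forall>k. B (pe k) (ne k) > 0"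
    and Mpos: "\<forall>i. Mv $ i > 0"
    and ebound: "\<forall>k. - (pi/2) < etab $ k \<and> etab $ k < pi/2"
    and Vb_pos: "\<forall>i. Vb $ i > 0"
    and eq3: "0 = - (Emat pe ne B Xd Xdp etab *v Vb) + Efd"
    and cond: "pos_def (Emat pe ne B Xd Xdp etab
                 - diag_mat (invv Vb) ** abs_mat (incidence pe ne) ** Gam pe ne B Vb ** diag_mat (sinv etab)
                   ** diag_mat (invv (cosv etab)) ** diag_mat (sinv etab) ** transpose (abs_mat (incidence pe ne))
                   ** diag_mat (invv Vb))"
  shows "\<exists>r>0. \<forall>et om VV. dist et etab < r \<and> dist om omegab < r \<and> dist VV Vb < r
            \<and> (et, om, VV) \<noteq> (etab, omegab, Vb) \<longrightarrow>
            W1 Mv om omegab + W2 pe ne B Xd Xdp Efd et etab VV Vb > 0"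
proof -
  define E0 where "E0 = Emat pe ne B Xd Xdp etab"
  define P where "P = diag_mat (invv Vb) ** abs_mat (incidence pe ne) ** Gam pe ne B Vb ** diag_mat (sinv etab)
                   ** diag_mat (invv (cosv etab)) ** diag_mat (sinv etab) ** transpose (abs_mat (incidence pe ne))
                   ** diag_mat (invv Vb)"
  define F where "F = Fvec B Xd Xdp"
  define bb where "bb = (\<lambda>k. B (pe k) (ne k))"
  define gb where "gb = (\<lambda>k. bb k * Vb $ pe k * Vb $ ne k)"
  define c where "c = (\<lambda>k. gb k * cos (etab $ k))"
  define L where "L = (\<lambda>b::real^'n. \<lambda>k. bb k * (Vb $ pe k * b $ ne k + Vb $ ne k * b $ pe k))"
  define Q where "Q = (\<lambda>(a::real^'m) (b::real^'n) (w::real^'n).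
       (\<Sum>i\<in>UNIV. Mv $ i * (w $ i)^2 / 2)
     + (\<Sum>k\<in>UNIV. c k / 2 * (a $ k)^2 + L b k * sin (etab $ k) * a $ k)
     + (b \<bullet> (E0 *v b)) / 2)"
  define R where "R = (\<lambda>(a::real^'m) (b::real^'n) k.
       gb k * cos (etab $ k) * (1 - cos (a $ k) - (a $ k)^2 / 2) + gb k * sin (etab $ k) * (sin (a $ k) - a $ k)
     - L b k * (cos (etab $ k + a $ k) - cos (etab $ k) + sin (etab $ k) * a $ k)
     - bb k * b $ pe k * b $ ne k * (cos (etab $ k + a $ k) - cos (etab $ k)))"
  have bb_pos: "bb k > 0" for k using bpos by (simp add: bb_def)
  have gb_pos: "gb k > 0" for k using bb_pos Vb_pos by (simp add: gb_def)
  have cos_pos: "cos (etab $ k) > 0" for k using ebound by (intro cos_gt_zero_pi) auto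
  have c_pos: "c k > 0" for k using gb_pos cos_pos by (simp add: c_def)
  have expand: "W1 Mv (omegab + w) omegab + W2 pe ne B Xd Xdp Efd (etab + a) etab (Vb + b) Vb
      = Q a b w + (\<Sum>k\<in>UNIV. R a b k)" for a b w
  proof -
    have edge: "- B (pe k) (ne k) * (Vb + b) $ pe k * (Vb + b) $ ne k * cos ((etab + a) $ k)
       + B (pe k) (ne k) * Vb $ pe k * Vb $ ne k * cos (etab $ k)
       - B (pe k) (ne k) * Vb $ pe k * Vb $ ne k * sin (etab $ k) * ((etab + a) $ k - etab $ k)
       = (c k / 2 * (a $ k)^2 + L b k * sin (etab $ k) * a $ k) - bb k * b $ pe k * b $ ne k * cos (etab $ k)
         - L b k * cos (etab $ k) + R a b k" for k
      using edge_id[of "bb k" "Vb $ pe k" "b $ pe k" "Vb $ ne k" "b $ ne k" "etab $ k" "a $ k"]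
      by (simp add: c_def gb_def L_def R_def bb_def mult_ac)
    have node: "- Efd $ i * ((Vb + b) $ i - Vb $ i) + F $ i * ((Vb + b) $ i)^2 / 2 - F $ i * (Vb $ i)^2 / 2
       = (F $ i * Vb $ i * b $ i - Efd $ i * b $ i) + F $ i * (b $ i)^2 / 2" for i
      by (simp add: power2_eq_square algebra_simps)
    have lin: "(\<Sum>i\<in>UNIV. F $ i * Vb $ i * b $ i) - (\<Sum>k\<in>UNIV. L b k * cos (etab $ k)) = (\<Sum>i\<in>UNIV. Efd $ i * b $ i)"
    proof -
      have "b \<bullet> (E0 *v Vb) = b \<bullet> Efd" using eq3 unfolding E0_def by (simp add: algebra_simps)
      moreover have "b \<bullet> (E0 *v Vb) = (\<Sum>i\<in>UNIV. F $ i * b $ i * Vb $ i)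
          - (\<Sum>k\<in>UNIV. bb k * cos (etab $ k) * (b $ pe k * Vb $ ne k + b $ ne k * Vb $ pe k))"
        unfolding E0_def F_def bb_def by (rule emat_bilin[OF pn Bs])
      ultimately show ?thesis
        by (simp add: inner_vec_def L_def mult_ac add.commute)
    qed
    have quad: "(\<Sum>i\<in>UNIV. F $ i * (b $ i)^2) / 2 - (\<Sum>k\<in>UNIV. bb k * b $ pe k * b $ ne k * cos (etab $ k))
        = (b \<bullet> (E0 *v b)) / 2"
    proof -
      have "b \<bullet> (E0 *v b) = (\<Sum>i\<in>UNIV. F $ i * b $ i * b $ i)
          - (\<Sum>k\<in>UNIV. bb k * cos (etab $ k) * (b $ pe k * b $ ne k + b $ ne k * b $ pe k))"
        unfolding E0_def F_def bb_def by (rule emat_bilin[OF pn Bs])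
      also have "\<dots> = (\<Sum>i\<in>UNIV. F $ i * (b $ i)^2) - 2 * (\<Sum>k\<in>UNIV. bb k * b $ pe k * b $ ne k * cos (etab $ k))"
        by (simp add: power2_eq_square sum_distrib_left algebra_simps)
      finally show ?thesis by simp
    qed
    have "W1 Mv (omegab + w) omegab + W2 pe ne B Xd Xdp Efd (etab + a) etab (Vb + b) Vb
       = (\<Sum>i\<in>UNIV. Mv $ i * (w $ i)^2 / 2)
         + ((\<Sum>k\<in>UNIV. c k / 2 * (a $ k)^2 + L b k * sin (etab $ k) * a $ k)
            - (\<Sum>k\<in>UNIV. bb k * b $ pe k * b $ ne k * cos (etab $ k))
            - (\<Sum>k\<in>UNIV. L b k * cos (etab $ k)) + (\<Sum>k\<in>UNIV. R a b k))
         + ((\<Sum>i\<in>UNIV. F $ i * Vb $ i * b $ i) - (\<Sum>i\<in>UNIV. Efd $ i * b $ i) + (\<Sum>i\<in>UNIV. F $ i * (b $ i)^2) / 2)"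
      unfolding W1_exp W2_exp edge node F_def[symmetric]
      by (simp add: sum.distrib sum_subtractf sum_divide_distrib)
    then show ?thesis unfolding Q_def using lin quad by simp
  qed
  define s where "s = (\<lambda>b k. L b k * sin (etab $ k))"
  define y where "y = (\<lambda>b::real^'n. \<lambda>k. inverse (Vb $ pe k) * b $ pe k + inverse (Vb $ ne k) * b $ ne k)"
  have Pq: "b \<bullet> (P *v b) = (\<Sum>k\<in>UNIV. gb k * (sin (etab $ k) * inverse (cos (etab $ k)) * sin (etab $ k)) * (y b k)^2)" for b
    unfolding P_def P_quad[OF pn] y_def gb_def bb_def by (simp add: mult_ac)
  have sk: "s b k ^ 2 / c k = gb k * (sin (etab $ k) * inverse (cos (etab $ k)) * sin (etab $ k)) * (y b k)^2" for b k
  proof -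
    have "Vb $ pe k > 0" "Vb $ ne k > 0" using Vb_pos by auto
    then show ?thesis using cos_pos[of k] bb_pos[of k]
      by (simp add: s_def L_def c_def gb_def y_def field_simps power2_eq_square)
  qed
  have sq: "c k / 2 * a ^ 2 + s b k * a = c k / 2 * (a + s b k / c k)^2 - s b k ^ 2 / c k / 2" for a b k
    using c_pos[of k] by (simp add: field_simps power2_eq_square)
  have Qdec: "Q a b w = (\<Sum>i\<in>UNIV. Mv $ i * (w $ i)^2 / 2) + (\<Sum>k\<in>UNIV. c k / 2 * (a $ k + s b k / c k)^2)
       + (b \<bullet> ((E0 - P) *v b)) / 2" for a b w
  proof -
    have "(\<Sum>k\<in>UNIV. c k / 2 * (a $ k)^2 + L b k * sin (etab $ k) * a $ k)
        = (\<Sum>k\<in>UNIV. c k / 2 * (a $ k + s b k / c k)^2) - (b \<bullet> (P *v b)) / 2"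
    proof -
      have "(\<Sum>k\<in>UNIV. c k / 2 * (a $ k)^2 + L b k * sin (etab $ k) * a $ k)
          = (\<Sum>k\<in>UNIV. c k / 2 * (a $ k + s b k / c k)^2 - s b k ^ 2 / c k / 2)"
        by (rule sum.cong[OF refl]) (subst sq[symmetric], simp add: s_def)
      also have "\<dots> = (\<Sum>k\<in>UNIV. c k / 2 * (a $ k + s b k / c k)^2
           - gb k * (sin (etab $ k) * inverse (cos (etab $ k)) * sin (etab $ k)) * (y b k)^2 / 2)"
        by (rule sum.cong[OF refl]) (simp only: sk)
      finally show ?thesis unfolding Pq by (simp add: sum_subtractf sum_divide_distrib)
    qed
    moreover have "b \<bullet> ((E0 - P) *v b) = b \<bullet> (E0 *v b) - b \<bullet> (P *v b)"
      by (simp add: matrix_vector_mult_diff_rdistrib inner_diff_right)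
    ultimately show ?thesis unfolding Q_def by simp
  qed
  have Sb: "b \<noteq> 0 \<Longrightarrow> b \<bullet> ((E0 - P) *v b) > 0" for b
    using cond unfolding pos_def_def E0_def P_def by blast
  have Sb0: "b \<bullet> ((E0 - P) *v b) \<ge> 0" for b
    using Sb[of b] by (cases "b = 0") auto
  have Wnn: "(\<Sum>i\<in>UNIV. Mv $ i * (w $ i)^2 / 2) \<ge> 0" for w
    using Mpos by (intro sum_nonneg) (simp add: less_imp_le)
  have Cnn: "(\<Sum>k\<in>UNIV. c k / 2 * (a $ k + s b k / c k)^2) \<ge> 0" for a b
    using c_pos by (intro sum_nonneg) (simp add: less_imp_le)
  have Qpos: "Q a b w > 0" if nz: "(a, b, w) \<noteq> 0" for a b w
  proof (cases "b = 0")
    case False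
    then show ?thesis unfolding Qdec using Sb[OF False] Wnn[of w] Cnn[of a b] by simp
  next
    case True
    have s0: "s b k = 0" for k using True by (simp add: s_def L_def)
    show ?thesis
    proof (cases "a = 0")
      case False
      then obtain k where k: "a $ k \<noteq> 0" by (auto simp: vec_eq_iff)
      have "(\<Sum>k\<in>UNIV. c k / 2 * (a $ k + s b k / c k)^2) > 0"
        using c_pos k by (intro sum_pos2[where i=k]) (auto simp: s0 less_imp_le)
      then show ?thesis unfolding Qdec using Sb0[of b] Wnn[of w] by simp
    next
      case a0: True
      with True nz have "w \<noteq> 0" by (simp add: zero_prod_def)
      then obtain i where i: "w $ i \<noteq> 0" by (auto simp: vec_eq_iff)
      have "(\<Sum>i\<in>UNIV. Mv $ i * (w $ i)^2 / 2) > 0"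
        using Mpos i by (intro sum_pos2[where i=i]) (auto simp: less_imp_le)
      then show ?thesis unfolding Qdec using Sb0[of b] Cnn[of a b] by simp
    qed
  qed
  define Qz where "Qz = (\<lambda>z::(real^'m) \<times> (real^'n) \<times> (real^'n). Q (fst z) (fst (snd z)) (snd (snd z)))"
  have Qz_cont: "continuous_on UNIV Qz"
    unfolding Qz_def Q_def L_def
    by (intro continuous_intros bounded_linear.continuous_on[OF matrix_vector_mul_bounded_linear]) auto
  have Qz_hom: "Qz (t *\<^sub>R z) = t^2 * Qz z" for t z
    unfolding Qz_def Q_def L_def
    by (simp add: matrix_vector_mult_scaleR sum_distrib_left power2_eq_square algebra_simps)
  have "continuous_on (sphere 0 1) Qz" using continuous_on_subset[OF Qz_cont] by blast
  moreover have "sphere (0::(real^'m) \<times> (real^'n) \<times> (real^'n)) 1 \<noteq> {}" by simp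
  ultimately obtain z0 where z0: "z0 \<in> sphere 0 1" and z0min: "\<forall>y\<in>sphere 0 1. Qz z0 \<le> Qz y"
    using continuous_attains_inf[OF compact_sphere] by blast
  define lam where "lam = Qz z0"
  have lam_pos: "lam > 0"
  proof -
    have "z0 \<noteq> 0" using z0 by auto
    moreover have "(fst z0, fst (snd z0), snd (snd z0)) = z0" by simp
    ultimately show ?thesis unfolding lam_def Qz_def using Qpos[of "fst z0" "fst (snd z0)" "snd (snd z0)"] by metis
  qed
  have Qlow: "Qz z \<ge> lam * (norm z)^2" for z
  proof (cases "z = 0")
    case True then show ?thesis unfolding Qz_def Q_def by simp
  next
    case False
    then have nz: "norm z > 0" by simp
    have "inverse (norm z) *\<^sub>R z \<in> sphere 0 1" using nz by (simp add: norm_scaleR)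
    then have "lam \<le> Qz (inverse (norm z) *\<^sub>R z)" using z0min unfolding lam_def by blast
    also have "\<dots> = (inverse (norm z))^2 * Qz z" by (rule Qz_hom)
    finally have "lam * (norm z)^2 \<le> (inverse (norm z))^2 * Qz z * (norm z)^2"
      by (intro mult_right_mono) auto
    also have "\<dots> = Qz z" using nz by (simp add: field_simps power2_eq_square)
    finally show ?thesis .
  qed
  define K where "K = (\<Sum>k\<in>UNIV. 2 * gb k + bb k * (Vb $ pe k + Vb $ ne k) + 2 * bb k)"
  have K0: "K \<ge> 0" unfolding K_def using gb_pos bb_pos Vb_pos
    by (intro sum_nonneg) (simp add: add_nonneg_nonneg less_imp_le)
  have Rb: "(\<Sum>k\<in>UNIV. R a b k) \<ge> - K * (norm (a, b, w))^3" if n1: "norm (a, b, w) \<le> 1" for a b w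
  proof -
    define n where "n = norm (a, b, w)"
    have an: "\<bar>a $ k\<bar> \<le> n" for k
      using component_le_norm_cart[of a k] norm_fst_le[of a "(b, w)"] unfolding n_def by linarith
    have bn: "\<bar>b $ i\<bar> \<le> n" for i
      using component_le_norm_cart[of b i] norm_fst_le[of b w] norm_snd_le[where x=a and y="(b, w)"] unfolding n_def by linarith
    have Rk: "\<bar>R a b k\<bar> \<le> (2 * gb k + bb k * (Vb $ pe k + Vb $ ne k) + 2 * bb k) * n^3" for k
    proof -
      have "\<bar>R a b k\<bar> \<le> (2 * (bb k * Vb $ pe k * Vb $ ne k) + bb k * (Vb $ pe k + Vb $ ne k) + 2 * bb k) * n^3"
        unfolding R_def gb_def L_def
        by (rule R_bound[OF an bn bn]) (use n1 bb_pos Vb_pos in \<open>auto simp: n_def less_imp_le\<close>)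
      then show ?thesis by (simp add: gb_def)
    qed
    have "- ((2 * gb k + bb k * (Vb $ pe k + Vb $ ne k) + 2 * bb k) * n^3) \<le> R a b k" for k
      using Rk[of k] unfolding abs_le_iff by linarith
    then have "(\<Sum>k\<in>UNIV. - ((2 * gb k + bb k * (Vb $ pe k + Vb $ ne k) + 2 * bb k) * n^3)) \<le> (\<Sum>k\<in>UNIV. R a b k)"
      by (intro sum_mono)
    moreover have "(\<Sum>k\<in>UNIV. - ((2 * gb k + bb k * (Vb $ pe k + Vb $ ne k) + 2 * bb k) * n^3)) = - K * n^3"
      unfolding K_def by (simp add: sum_negf sum_distrib_right)
    ultimately show ?thesis unfolding n_def by simp
  qed
  define r where "r = min 1 (lam / (K + 1)) / 3"
  have r_pos: "r > 0" unfolding r_def using lam_pos K0 by simp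
  show ?thesis
  proof (intro exI[of _ r] conjI r_pos allI impI)
    fix et om VV
    assume H: "dist et etab < r \<and> dist om omegab < r \<and> dist VV Vb < r \<and> (et, om, VV) \<noteq> (etab, omegab, Vb)"
    define a where "a = et - etab"
    define b where "b = VV - Vb"
    define w where "w = om - omegab"
    define n where "n = norm (a, b, w)"
    have na: "norm a < r" "norm b < r" "norm w < r" using H by (auto simp: a_def b_def w_def dist_norm)
    have "n \<le> norm a + norm b + norm w"
      unfolding n_def using norm_Pair_le[of a "(b, w)"] norm_Pair_le[of b w] by linarith
    then have n3: "n < 3 * r" using na by linarith
    then have n1: "n \<le> 1" and nl: "n < lam / (K + 1)" unfolding r_def by auto
    have "(a, b, w) \<noteq> 0" using H by (auto simp: a_def b_def w_def zero_prod_def)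
    then have npos: "n > 0" unfolding n_def by simp
    have U: "W1 Mv om omegab + W2 pe ne B Xd Xdp Efd et etab VV Vb = Q a b w + (\<Sum>k\<in>UNIV. R a b k)"
      using expand[of w a b] by (simp add: a_def b_def w_def)
    have "Q a b w \<ge> lam * n^2" using Qlow[of "(a, b, w)"] unfolding Qz_def n_def by simp
    moreover have "(\<Sum>k\<in>UNIV. R a b k) \<ge> - K * n^3" using Rb[of a b w] n1 unfolding n_def by simp
    moreover have "lam * n^2 - K * n^3 > 0"
    proof -
      have "(K + 1) * n < lam" using nl K0 by (simp add: field_simps)
      then have "K * n < lam" using npos by (simp add: algebra_simps)
      then have "0 < n^2 * (lam - K * n)" using npos by simp
      then show ?thesis by (simp add: power2_eq_square power3_eq_cube algebra_simps)
    qed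
    ultimately show "W1 Mv om omegab + W2 pe ne B Xd Xdp Efd et etab VV Vb > 0" unfolding U by linarith
  qed
qed


theorem theorem1:
  fixes pe ne :: "'m::finite \<Rightarrow> 'n::finite"
    and B :: "'n \<Rightarrow> 'n \<Rightarrow> real" and Xd Xdp :: "'n \<Rightarrow> real"
    and Mv Av Tv Efd ub Pl omegab Vb :: "real^'n" and etab :: "real^'m"
    and eta :: "real \<Rightarrow> real^'m" and omega V u :: "real \<Rightarrow> real^'n" and t :: real
  defines "D \<equiv> incidence pe ne"
    and "U \<equiv> (\<lambda>et om VV. W1 Mv om omegab + W2 pe ne B Xd Xdp Efd et etab VV Vb)"
  assumes graph: "simple_connected_graph pe ne"
    and B_sym: "\<forall>i j. B i j = B j i"
    and B_pos: "\<forall>i j. adj pe ne i j \<longrightarrow> B i j > 0"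
    and B_self: "\<forall>i. B i i < 0 \<and> \<bar>B i i\<bar> > (\<Sum>j\<in>{j. adj pe ne i j}. \<bar>B i j\<bar>)"
    and X_pos: "\<forall>i. Xd i > Xdp i \<and> Xdp i > 0"
    and MAT_pos: "\<forall>i. Mv $ i > 0 \<and> Av $ i > 0 \<and> Tv $ i > 0"
    and etab_range: "\<exists>th. etab = transpose D *v th"
    and etab_bound: "\<forall>k. - (pi/2) < etab $ k \<and> etab $ k < pi/2"
    and Vb_pos: "\<forall>i. Vb $ i > 0"
    and eq1: "transpose D *v omegab = 0"
    and eq2: "0 = ub - D *v (Gam pe ne B Vb *v sinv etab) - diag_mat Av *v omegab - Pl"
    and eq3: "0 = - (Emat pe ne B Xd Xdp etab *v Vb) + Efd"
    and cond: "pos_def (Emat pe ne B Xd Xdp etab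
                 - diag_mat (invv Vb) ** abs_mat D ** Gam pe ne B Vb ** diag_mat (sinv etab)
                   ** diag_mat (invv (cosv etab)) ** diag_mat (sinv etab) ** transpose (abs_mat D)
                   ** diag_mat (invv Vb))"
    and sol_eta: "(eta has_vector_derivative (transpose D *v omega t)) (at t)"
    and sol_omega: "(omega has_vector_derivative
          (diag_mat (invv Mv) *v (u t - D *v (Gam pe ne B (V t) *v sinv (eta t))
                                   - diag_mat Av *v omega t - Pl))) (at t)"
    and sol_V: "(V has_vector_derivative
          (diag_mat (invv Tv) *v (- (Emat pe ne B Xd Xdp (eta t) *v V t) + Efd))) (at t)"
  shows "U etab omegab Vb = 0
    \<and> (\<exists>r>0. \<forall>et om VV. dist et etab < r \<and> dist om omegab < r \<and> dist VV Vb < r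
            \<and> (et, om, VV) \<noteq> (etab, omegab, Vb) \<longrightarrow> U et om VV > 0)
    \<and> ((\<lambda>s. U (eta s) (omega s) (V s)) has_real_derivative
         (- ((omega t - omegab) \<bullet> (diag_mat Av *v (omega t - omegab)))
          - ((Emat pe ne B Xd Xdp (eta t) *v V t - Efd)
               \<bullet> (diag_mat (invv Tv) *v (Emat pe ne B Xd Xdp (eta t) *v V t - Efd)))
          + (omega t - omegab) \<bullet> (u t - ub))) (at t)"
  proof -
  have pn: "\<forall>k. pe k \<noteq> ne k" using graph unfolding simple_connected_graph_def by blast
  have bpos: "\<forall>k. B (pe k) (ne k) > 0"
  proof
    fix k
    have "adj pe ne (pe k) (ne k)" unfolding adj_def by blast
    then show "B (pe k) (ne k) > 0" using B_pos by blast
  qed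
  have Mpos: "\<forall>i. Mv $ i > 0" using MAT_pos by blast
  have p1: "U etab omegab Vb = 0"
    unfolding U_def W1_def W2_def by simp
  have p2: "\<exists>r>0. \<forall>et om VV. dist et etab < r \<and> dist om omegab < r \<and> dist VV Vb < r
            \<and> (et, om, VV) \<noteq> (etab, omegab, Vb) \<longrightarrow> U et om VV > 0"
    unfolding U_def using locmin_part[OF pn B_sym bpos Mpos etab_bound Vb_pos eq3 cond[unfolded D_def]] by simp
  have p3: "((\<lambda>s. U (eta s) (omega s) (V s)) has_real_derivative
         (- ((omega t - omegab) \<bullet> (diag_mat Av *v (omega t - omegab)))
          - ((Emat pe ne B Xd Xdp (eta t) *v V t - Efd)
               \<bullet> (diag_mat (invv Tv) *v (Emat pe ne B Xd Xdp (eta t) *v V t - Efd)))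
          + (omega t - omegab) \<bullet> (u t - ub))) (at t)"
    using deriv_part[where pe=pe and ne=ne and B=B and Xd=Xd and Xdp=Xdp and Mv=Mv and Av=Av and Tv=Tv
          and Efd=Efd and ub=ub and Pl=Pl and omegab=omegab and Vb=Vb and etab=etab and eta=eta
          and omega=omega and V=V and u=u and t=t, OF pn B_sym Mpos eq1[unfolded D_def] eq2[unfolded D_def]
          sol_eta[unfolded D_def] sol_omega[unfolded D_def] sol_V]
    unfolding U_def by simp
  show ?thesis using p1 p2 p3 by blast
qed

end
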